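(* There exists $\lambda_0>0$ such that for every $\lambda\ge\lambda_0$ the function $\beta\mapsto \rho\,\phi(a)+\gamma\,\Phi(a)$ is strictly increasing on $(0,\infty)$, where $n,\rho,a,\gamma$ are the functions of $(\beta,\lambda)$ defined in the context.
   Context: $\phi$ and $\Phi$ denote the standard normal density and distribution function. For $\lambda>0$ and $\beta\ge 0$ set $n=\lambda+\beta\sqrt{\lambda}$, $\rho=\lambda/n$, $a=\sqrt{-2n(1-\rho+\ln\rho)}$ (note $1-\rho+\ln\rho\le 0$), and $\gamma=(n-\lambda)/\sqrt{n}=\beta\sqrt{\rho}$. *)

theory Defs
  imports "HOL-Probability.Probability"
begin

definition std_normal_cdf :: "real \<Rightarrow> real" where
  "std_normal_cdf x = (LINT t : {..x} | lborel. std_normal_density t)"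

definition nn :: "real \<Rightarrow> real \<Rightarrow> real" where
  "nn lam \<beta> = lam + \<beta> * sqrt lam"

definition rho :: "real \<Rightarrow> real \<Rightarrow> real" where
  "rho lam \<beta> = lam / nn lam \<beta>"

definition aa :: "real \<Rightarrow> real \<Rightarrow> real" where
  "aa lam \<beta> = sqrt (- 2 * nn lam \<beta> * (1 - rho lam \<beta> + ln (rho lam \<beta>)))"

definition gam :: "real \<Rightarrow> real \<Rightarrow> real" where
  "gam lam \<beta> = (nn lam \<beta> - lam) / sqrt (nn lam \<beta>)"

end

theory Submission
  imports Defs
begin


lemma integrable_phi: "integrable lborel std_normal_density"
  using integrable_std_normal_moment[of 0] by simp

lemma Phi_mono: "x \<le> y \<Longrightarrow> std_normal_cdf x \<le> std_normal_cdf y"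
  unfolding std_normal_cdf_def set_lebesgue_integral_def
  by (intro integral_mono integrable_mult_indicator integrable_phi)
     (auto split: split_indicator)

lemma Phi0: "std_normal_cdf 0 \<ge> 1/2"
proof -
  have tot: "integral\<^sup>L lborel std_normal_density = 1"
    using integral_std_normal_moment_even[of 0] by simp
  have refl: "std_normal_cdf 0 = (LBINT x : {0..}. std_normal_density x)"
    unfolding std_normal_cdf_def
  proof -
    have e: "\<And>x. std_normal_density (- x) = std_normal_density x"
      by (simp add: std_normal_density_def)
    show "(LBINT x : {..0}. std_normal_density x) = (LBINT x : {0..}. std_normal_density x)"
      by (subst set_integral_reflect) (simp add: e atLeast_def)
  qed
  have "(LBINT x : {0<..}. std_normal_density x) \<le> (LBINT x : {0..}. std_normal_density x)"
    unfolding set_lebesgue_integral_def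
    by (intro integral_mono integrable_mult_indicator integrable_phi)
     (auto split: split_indicator)
  moreover have "std_normal_cdf 0 + (LBINT x : {0<..}. std_normal_density x) = 1"
  proof -
    have "std_normal_cdf 0 + (LBINT x : {0<..}. std_normal_density x)
       = integral\<^sup>L lborel (\<lambda>x. indicator {..0} x *\<^sub>R std_normal_density x + indicator {0<..} x *\<^sub>R std_normal_density x)"
      unfolding std_normal_cdf_def set_lebesgue_integral_def
      by (rule Bochner_Integration.integral_add[symmetric]; intro integrable_mult_indicator integrable_phi) auto
    also have "\<dots> = integral\<^sup>L lborel std_normal_density"
      by (intro Bochner_Integration.integral_cong) (auto split: split_indicator)
    finally show ?thesis using tot by simp
  qed
  ultimately show ?thesis using refl by linarith
qed



definition qq :: "real \<Rightarrow> real" where "qq L = 1 + (L - 1) * exp L"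

lemma qq_deriv: "(qq has_real_derivative L * exp L) (at L)"
  unfolding qq_def[abs_def]
  by (auto intro!: derivative_eq_intros simp: algebra_simps)

lemma qq_mono: "0 \<le> L1 \<Longrightarrow> L1 \<le> L2 \<Longrightarrow> qq L1 \<le> qq L2"
  by (rule DERIV_nonneg_imp_nondecreasing[of L1 L2 qq]) (auto intro!: exI qq_deriv)

lemma qq_ge: assumes "0 \<le> L" shows "qq L \<ge> L^2/2"
proof -
  have "(\<lambda>x. qq x - x^2/2) 0 \<le> (\<lambda>x. qq x - x^2/2) L"
  proof (rule DERIV_nonneg_imp_nondecreasing[OF assms])
    fix x :: real assume x: "0 \<le> x" "x \<le> L"
    have "((\<lambda>x. qq x - x^2/2) has_real_derivative (x * exp x - x)) (at x)"
      by (auto intro!: derivative_eq_intros qq_deriv)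
    moreover have "x * exp x - x \<ge> 0" using x by (simp add: mult_left_mono[of 1 "exp x" x, simplified])
    ultimately show "\<exists>y. ((\<lambda>x. qq x - x^2/2) has_real_derivative y) (at x) \<and> y \<ge> 0" by blast
  qed
  then show ?thesis by (simp add: qq_def)
qed

definition HH :: "real \<Rightarrow> real \<Rightarrow> real" where
  "HH lam L = exp (-L - lam * qq L) / sqrt (2*pi) + 1/2 * sqrt lam * (exp (L/2) - exp (-L/2))"

definition HD :: "real \<Rightarrow> real \<Rightarrow> real" where
  "HD lam L = exp (-L - lam * qq L) * (-1 - lam * (L * exp L)) / sqrt (2*pi) + 1/2 * sqrt lam * (exp (L/2)/2 + exp (-L/2)/2)"

lemma HH_deriv: "(HH lam has_real_derivative HD lam L) (at L)"
proof -
  have sp: "\<And>x. sqrt (pi * 2) * (sqrt (pi * 2) * x) = pi * 2 * x"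
    by (simp add: mult.assoc[symmetric])
  show ?thesis
  unfolding HH_def[abs_def] HD_def
  apply (rule derivative_eq_intros refl qq_deriv | simp)+
  apply (simp add: field_simps sp)
  done
qed

lemma HH_deriv_pos: assumes lam: "lam \<ge> 36" and L: "L \<ge> 0"
  shows "HD lam L > 0"
proof -
  have ex: "exp(-L - lam*qq L) = exp(-L)*exp(-lam*qq L)" by (simp add: exp_add[symmetric])
  have e: "exp (-L) * exp L = 1" by (simp add: exp_minus)
  have hd: "HD lam L = - (exp (-L) + lam * L) * exp (- lam * qq L) / sqrt (2*pi) + 1/4 * sqrt lam * (exp (L/2) + exp (-L/2))"
    unfolding HD_def ex
  proof -
    have "exp (- L) * exp (- lam * qq L) * (- 1 - lam * (L * exp L)) = - (exp (-L) + lam * L) * exp (- lam * qq L)"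
      using e by (simp add: algebra_simps)
    then show "exp (- L) * exp (- lam * qq L) * (- 1 - lam * (L * exp L)) / sqrt (2 * pi) +
    1 / 2 * sqrt lam * (exp (L / 2) / 2 + exp (- L / 2) / 2) =
    - (exp (- L) + lam * L) * exp (- lam * qq L) / sqrt (2 * pi) +
    1 / 4 * sqrt lam * (exp (L / 2) + exp (- L / 2))" by (simp add: algebra_simps)
  qed
  define s where "s = sqrt lam"
  have s6: "s \<ge> 6" unfolding s_def using lam real_sqrt_le_mono[of 36 lam] by simp
  have ss: "s^2 = lam" unfolding s_def using lam by simp
  define y where "y = s * L"
  have y0: "y \<ge> 0" using s6 L by (simp add: y_def)
  have e1: "exp (- lam * qq L) \<le> 1" using qq_ge[OF L] lam
    by (simp add: mult_nonneg_nonneg order_trans[OF _ qq_ge[OF L]])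
  have e2: "exp (- lam * qq L) \<le> exp (- (y^2/2))"
    using qq_ge[OF L] lam by (simp add: y_def power_mult_distrib ss mult_left_mono)
  have y1: "y \<le> 1 + y^2/2"
  proof -
    have "0 \<le> (y-1)*(y-1)" by simp
    then show ?thesis by (simp add: power2_eq_square algebra_simps)
  qed
  have y2: "1 + y^2/2 \<le> exp (y^2/2)" by (rule exp_ge_add_one_self)
  have "lam * L = s * y" by (simp add: y_def ss[symmetric] power2_eq_square)
  have A: "lam * L * exp (- lam * qq L) \<le> s"
  proof -
    have "lam * L * exp (- lam * qq L) \<le> s * y * exp (- (y^2/2))"
      using e2 \<open>lam * L = s * y\<close> s6 y0 by (simp add: mult_left_mono)
    also have "\<dots> = s * (y * exp (- (y^2/2)))" by simp
    also have "\<dots> \<le> s * (exp (y^2/2) * exp (- (y^2/2)))"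
      using y1 y2 s6 by (intro mult_left_mono mult_right_mono) (auto intro: order_trans[OF y1 y2])
    also have "\<dots> = s" by (simp add: exp_minus)
    finally show ?thesis .
  qed
  have B: "exp (-L) * exp (- lam * qq L) \<le> 1"
    using e1 L by (simp add: mult_le_one)
  have C: "(exp (-L) + lam * L) * exp (- lam * qq L) \<le> 1 + s"
    using A B by (simp add: distrib_right)
  have D: "exp (L/2) + exp (-L/2) \<ge> 2"
  proof -
    define u where "u = exp (L/2)"
    have u: "u > 0" by (simp add: u_def)
    have "exp (-L/2) = 1/u" by (simp add: u_def exp_minus inverse_eq_divide)
    moreover have "u + 1/u \<ge> 2"
    proof -
      have "u * u + 1 \<ge> 2 * u" using sum_squares_ge_zero[of "u-1" 0] by (simp add: algebra_simps power2_eq_square)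
      then show ?thesis using u by (simp add: field_simps)
    qed
    ultimately show ?thesis by (simp add: u_def)
  qed
  have P: "sqrt (2*pi) > 12/5"
  proof -
    have "(12/5)^2 < 2*pi" using pi_gt3 by (simp add: power2_eq_square)
    then have "sqrt ((12/5)^2) < sqrt (2*pi)" by (rule real_sqrt_less_mono)
    then show ?thesis by simp
  qed
  have "(exp (-L) + lam * L) * exp (- lam * qq L) / sqrt (2*pi) \<le> (1 + s) / sqrt (2*pi)"
    using C by (simp add: divide_right_mono)
  also have "\<dots> < (1+s) / (12/5)"
    using P s6 by (intro divide_strict_left_mono) auto
  also have "\<dots> \<le> s/2" using s6 by simp
  also have "s/2 \<le> 1/4 * s * (exp (L/2) + exp (-L/2))" using D s6 by simp
  finally have fin: "(exp (-L) + lam * L) * exp (- lam * qq L) / sqrt (2*pi) < 1/4 * sqrt lam * (exp (L/2) + exp (-L/2))"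
    by (simp add: s_def)
  have m: "- (exp (-L) + lam * L) * exp (- lam * qq L) / sqrt (2*pi) = - ((exp (-L) + lam * L) * exp (- lam * qq L) / sqrt (2*pi))"
    by (simp only: mult_minus_left minus_divide_left)
  show ?thesis unfolding hd m using fin by linarith
qed

lemma HH_mono: assumes "lam \<ge> 36" "0 \<le> L1" "L1 < L2" shows "HH lam L1 < HH lam L2"
  using assms
  by (intro DERIV_pos_imp_increasing[OF assms(3)]) (meson HH_deriv HH_deriv_pos order_trans less_imp_le)



lemma ident:
  assumes lam: "lam > 0" and b: "\<beta> \<ge> 0" and Ld: "L = ln (nn lam \<beta> / lam)"
  shows "L \<ge> 0" "aa lam \<beta> = sqrt (2 * lam * qq L)"
    "gam lam \<beta> = sqrt lam * (exp (L/2) - exp (-L/2))"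
    "rho lam \<beta> * std_normal_density (aa lam \<beta>) = exp (-L - lam * qq L) / sqrt (2*pi)"
proof -
  have np: "nn lam \<beta> \<ge> lam" using lam b by (simp add: nn_def)
  then have npos: "nn lam \<beta> > 0" using lam by linarith
  have eL: "exp L = nn lam \<beta> / lam" using npos lam Ld by simp
  show L0: "L \<ge> 0" using Ld np lam by simp
  have rL: "rho lam \<beta> = exp (-L)" using eL lam npos by (simp add: rho_def exp_minus)
  have lr: "ln (rho lam \<beta>) = -L" using rL by simp
  have ee: "exp (-L) * exp L = 1" by (simp add: exp_minus)
  have n: "nn lam \<beta> = lam * exp L" using eL lam by simp
  have inner: "- 2 * nn lam \<beta> * (1 - rho lam \<beta> + ln (rho lam \<beta>)) = 2 * lam * qq L"
    unfolding rL lr n qq_def using ee by (simp add: algebra_simps)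
  show aa: "aa lam \<beta> = sqrt (2 * lam * qq L)" unfolding aa_def inner ..
  have qn: "qq L \<ge> 0" using qq_ge[OF L0] by (smt (verit) zero_le_power2 divide_nonneg_pos)
  have aa2: "(aa lam \<beta>)^2 = 2 * lam * qq L" unfolding aa using qn lam by simp
  have h2: "exp (L/2) * exp (L/2) = exp L" by (simp add: exp_add[symmetric])
  have h3: "exp (-L/2) * exp (L/2) = 1" by (simp add: exp_add[symmetric])
  have sn: "sqrt (nn lam \<beta>) = sqrt lam * exp (L/2)"
    unfolding n by (simp add: real_sqrt_mult h2[symmetric])
  have sl: "sqrt lam * sqrt lam = lam" using lam by simp
  show "gam lam \<beta> = sqrt lam * (exp (L/2) - exp (-L/2))"
  proof -
    have sp: "sqrt lam > 0" using lam by simp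
    have "gam lam \<beta> = (lam * exp L - lam) / (sqrt lam * exp (L/2))"
      unfolding gam_def sn unfolding n ..
    also have "\<dots> = sqrt lam * (exp (L/2) - exp (-L/2))"
    proof -
      define u where "u = exp (L/2)"
      define r where "r = sqrt lam"
      have up: "u > 0" by (simp add: u_def)
      have eu: "exp (-L/2) = 1/u" unfolding u_def by (simp add: exp_minus inverse_eq_divide)
      have "(lam * exp L - lam) / (sqrt lam * exp (L/2)) = (r*r*(u*u) - r*r) / (r * u)"
        unfolding u_def r_def h2 sl ..
      also have "\<dots> = r * (u - 1/u)" using up sp unfolding r_def[symmetric]
        by (simp add: field_simps)
      finally show ?thesis unfolding eu u_def[symmetric] r_def[symmetric] .
    qed
    finally show ?thesis .
  qed
  show "rho lam \<beta> * std_normal_density (aa lam \<beta>) = exp (-L - lam * qq L) / sqrt (2*pi)"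
    unfolding std_normal_density_def aa2 rL by (simp add: exp_add[symmetric])
qed

theorem lemma3:
  shows "\<exists>l0 > 0. \<forall>lam \<ge> l0.
     strict_mono_on {0<..}
       (\<lambda>\<beta>. rho lam \<beta> * std_normal_density (aa lam \<beta>)
              + gam lam \<beta> * std_normal_cdf (aa lam \<beta>))"
proof (intro exI[of _ 36] conjI allI impI)
  fix lam :: real assume lam: "36 \<le> lam"
  have lp: "lam > 0" using lam by simp
  show "strict_mono_on {0<..}
       (\<lambda>\<beta>. rho lam \<beta> * std_normal_density (aa lam \<beta>)
              + gam lam \<beta> * std_normal_cdf (aa lam \<beta>))"
  proof (rule strict_mono_onI)
    fix b1 b2 :: real assume b1: "b1 \<in> {0<..}" and b2: "b2 \<in> {0<..}" and lt: "b1 < b2"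
    define L1 where "L1 = ln (nn lam b1 / lam)"
    define L2 where "L2 = ln (nn lam b2 / lam)"
    have b1': "b1 \<ge> 0" "b2 \<ge> 0" using b1 b2 by auto
    note i1 = ident[OF lp b1'(1) L1_def] and i2 = ident[OF lp b1'(2) L2_def]
    have sp: "sqrt lam > 0" using lp by simp
    have n12: "nn lam b1 < nn lam b2" using lt sp by (simp add: nn_def)
    have n1: "nn lam b1 > 0" using b1 sp lp by (simp add: nn_def add_pos_nonneg)
    have L12: "L1 < L2" unfolding L1_def L2_def using n12 n1 lp
      by (simp add: divide_strict_right_mono)
    define g1 where "g1 = gam lam b1"
    define g2 where "g2 = gam lam b2"
    define P1 where "P1 = std_normal_cdf (aa lam b1)"
    define P2 where "P2 = std_normal_cdf (aa lam b2)"
    have ex12: "exp (L1/2) \<le> exp (L2/2)" "exp (-L2/2) \<le> exp (-L1/2)" using L12 by auto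
    have d12: "exp (L1/2) - exp (-L1/2) \<le> exp (L2/2) - exp (-L2/2)" using ex12 by linarith
    have g12: "g1 \<le> g2" unfolding g1_def g2_def i1(3) i2(3) using sp
      by (intro mult_left_mono d12) auto
    have g2p: "g2 \<ge> 0" unfolding g2_def i2(3) using i2(1) sp
      by (intro mult_nonneg_nonneg) auto
    have P12: "P1 \<le> P2" unfolding P1_def P2_def i1(2) i2(2)
      using qq_mono[OF i1(1) less_imp_le[OF L12]] lp
      by (intro Phi_mono real_sqrt_le_mono) auto
    have a1: "aa lam b1 \<ge> 0" unfolding i1(2) using qq_ge[OF i1(1)] lp
      by (smt (verit) real_sqrt_ge_zero zero_le_power2 divide_nonneg_pos mult_nonneg_nonneg)
    have P1h: "P1 \<ge> 1/2" unfolding P1_def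
      using Phi0 Phi_mono[OF a1] by linarith
    have H: "HH lam L1 < HH lam L2" using HH_mono[OF lam i1(1) L12] .
    have "g2 * P2 - g1 * P1 \<ge> (g2 - g1) * (1/2)"
    proof -
      have "g2 * P1 \<le> g2 * P2" using P12 g2p by (rule mult_left_mono)
      moreover have "(g2 - g1) * (1/2) \<le> (g2 - g1) * P1" using g12 P1h by (intro mult_left_mono) auto
      ultimately show ?thesis by (simp add: algebra_simps)
    qed
    moreover have "HH lam L1 = exp (-L1 - lam * qq L1) / sqrt (2*pi) + g1 / 2"
      unfolding HH_def g1_def i1(3) by simp
    moreover have "HH lam L2 = exp (-L2 - lam * qq L2) / sqrt (2*pi) + g2 / 2"
      unfolding HH_def g2_def i2(3) by simp
    ultimately show "rho lam b1 * std_normal_density (aa lam b1) + gam lam b1 * std_normal_cdf (aa lam b1)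
      < rho lam b2 * std_normal_density (aa lam b2) + gam lam b2 * std_normal_cdf (aa lam b2)"
      unfolding i1(4) i2(4) using H
      by (simp add: g1_def g2_def P1_def P2_def algebra_simps)
  qed
qed simp

end
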